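(* Let $q\in\mathbb{C}\setminus\{0,1\}$. The left diagonal formal $q$-complex $0\to\mathbb{C}[[x_1,x_2]][[y]]\xrightarrow{d_y^0}\mathbb{C}[[x_1,x_2]][[y]]^{\oplus2}\xrightarrow{d_y^1}\mathbb{C}[[x_1,x_2]][[y]]\xrightarrow{\pi_y}\mathbb{C}[[x]]\to0$ and the right diagonal formal $q$-complex $0\to[[x]]\mathbb{C}[[y_1,y_2]]\xrightarrow{d_x^0}([[x]]\mathbb{C}[[y_1,y_2]])^{\oplus2}\xrightarrow{d_x^1}[[x]]\mathbb{C}[[y_1,y_2]]\xrightarrow{\pi_x}\mathbb{C}[[y]]\to0$ are exact.
   Context: $\mathbb{C}[[x_1,x_2]][[y]]$ is the Fréchet space of formal series $f=\sum_{n\ge0}f_n(x_1,x_2)y^n$ with $f_n\in\mathbb{C}[[x_1,x_2]]$ (product topology). Operators: $N_yf=\sum_{n\ge1}f_{n-1}y^n$, $D_{y,q}f=\sum_nq^nf_ny^n$, and $x_i$ acts by multiplication on the coefficients. $d_y^0f=(N_yf,\ (x_2-qx_1D_{y,q})f)$, $d_y^1(f,g)=(x_2-x_1D_{y,q})f-N_yg$, $\pi_y(\sum_nh_ny^n)=h_0(x,x)$. Symmetrically $[[x]]\mathbb{C}[[y_1,y_2]]$ consists of $f=\sum_{n\ge0}x^nf_n(y_1,y_2)$, with $N_xf=\sum_{n\ge1}x^nf_{n-1}$, $D_{x,q}f=\sum_nx^nq^nf_n$, $y_i$ acting by multiplication on coefficients; $d_x^0f=((y_1-qy_2D_{x,q})f,\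 N_xf)$, $d_x^1(f,g)=N_xf+(y_2D_{x,q}-y_1)g$, $\pi_x(\sum_nx^nh_n)=h_0(y,y)$. *)

theory Defs
  imports Complex_Main "HOL-Computational_Algebra.Formal_Power_Series" "HOL-Library.Function_Algebras" "HOL-Library.Product_Plus"
begin

text \<open>Left space C[[x1,x2]][[y]]: f n i j = coefficient of y^n x1^i x2^j.
  Right space [[x]]C[[y1,y2]]: f n i j = coefficient of x^n y1^i y2^j.\<close>

type_synonym ser3 = "nat \<Rightarrow> nat \<Rightarrow> nat \<Rightarrow> complex"

definition Nsh :: "ser3 \<Rightarrow> ser3" where
  "Nsh f = (\<lambda>n i j. if n = 0 then 0 else f (n - 1) i j)"

definition Dq :: "complex \<Rightarrow> ser3 \<Rightarrow> ser3" where
  "Dq q f = (\<lambda>n i j. q ^ n * f n i j)"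

definition mul1 :: "ser3 \<Rightarrow> ser3" where
  "mul1 f = (\<lambda>n i j. if i = 0 then 0 else f n (i - 1) j)"

definition mul2 :: "ser3 \<Rightarrow> ser3" where
  "mul2 f = (\<lambda>n i j. if j = 0 then 0 else f n i (j - 1))"

definition scal :: "complex \<Rightarrow> ser3 \<Rightarrow> ser3" where
  "scal c f = (\<lambda>n i j. c * f n i j)"

definition dy0 :: "complex \<Rightarrow> ser3 \<Rightarrow> ser3 \<times> ser3" where
  "dy0 q f = (Nsh f, mul2 f - scal q (mul1 (Dq q f)))"

definition dy1 :: "complex \<Rightarrow> ser3 \<times> ser3 \<Rightarrow> ser3" where
  "dy1 q fg = (mul2 (fst fg) - mul1 (Dq q (fst fg))) - Nsh (snd fg)"

(* h_0(x,x): coefficient of x^k is sum over i+j=k of coefficient of x1^i x2^j in h_0 *)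
definition piy :: "ser3 \<Rightarrow> complex fps" where
  "piy h = Abs_fps (\<lambda>k. \<Sum>i\<le>k. h 0 i (k - i))"

definition dx0 :: "complex \<Rightarrow> ser3 \<Rightarrow> ser3 \<times> ser3" where
  "dx0 q f = (mul1 f - scal q (mul2 (Dq q f)), Nsh f)"

definition dx1 :: "complex \<Rightarrow> ser3 \<times> ser3 \<Rightarrow> ser3" where
  "dx1 q fg = Nsh (fst fg) + (mul2 (Dq q (snd fg)) - mul1 (snd fg))"

definition pix :: "ser3 \<Rightarrow> complex fps" where
  "pix h = Abs_fps (\<lambda>k. \<Sum>i\<le>k. h 0 i (k - i))"

definition exact4 :: "('a \<Rightarrow> 'b::zero) \<Rightarrow> ('b \<Rightarrow> 'c::zero) \<Rightarrow> ('c \<Rightarrow> 'd::zero) \<Rightarrow> bool" where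
  "exact4 d0 d1 p \<longleftrightarrow> inj d0 \<and> range d0 = {v. d1 v = 0} \<and> range d1 = {h. p h = 0} \<and> surj p"

end

theory Submission
  imports Defs
begin

lemma pow_pos: "0 < x \<Longrightarrow> (q::complex) ^ x = q * q ^ (x - Suc 0)"
  by (cases x) auto

definition T2 :: "(nat \<Rightarrow> nat \<Rightarrow> complex) \<Rightarrow> nat \<Rightarrow> nat \<Rightarrow> complex" where
  "T2 a = (\<lambda>i j. (if j = 0 then 0 else a i (j - 1)) - (if i = 0 then 0 else a (i - 1) j))"

lemma T2_zero:
  assumes "T2 a = (\<lambda>i j. 0)"
  shows "a = (\<lambda>i j. 0)"
proof -
  have h: "\<And>i j. T2 a i j = 0" by (metis assms)
  have "\<And>j. a i j = 0" for i
  proof (induction i)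
    case 0
    have "T2 a 0 (Suc j) = a 0 j" unfolding T2_def by simp
    then show ?case using h[of 0 "Suc j"] by simp
  next
    case (Suc i)
    have "T2 a (Suc i) (Suc j) = a (Suc i) j - a i (Suc j)" unfolding T2_def by simp
    then show ?case using h[of "Suc i" "Suc j"] Suc.IH[of "Suc j"] by simp
  qed
  then show ?thesis by blast
qed

lemma T2_sum: "(\<Sum>i\<le>k. T2 a i (k - i)) = 0"
proof (cases k)
  case 0
  then show ?thesis by (simp add: T2_def)
next
  case (Suc m)
  have "(\<Sum>i\<le>Suc m. T2 a i (Suc m - i)) =
        (\<Sum>i\<le>Suc m. (if Suc m - i = 0 then 0 else a i (Suc m - i - 1)))
      - (\<Sum>i\<le>Suc m. (if i = 0 then 0 else a (i - 1) (Suc m - i)))"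
    by (simp add: T2_def sum_subtractf)
  also have "(\<Sum>i\<le>Suc m. (if Suc m - i = 0 then 0 else a i (Suc m - i - 1)))
      = (\<Sum>i\<le>m. a i (m - i))"
    by (simp add: sum.atMost_Suc Suc_diff_le)
  also have "(\<Sum>i\<le>Suc m. (if i = 0 then 0 else a (i - 1) (Suc m - i)))
      = (\<Sum>i\<le>m. a i (m - i))"
    by (subst sum.atMost_Suc_shift) simp
  finally show ?thesis using Suc by simp
qed

lemma T2_surj:
  assumes "\<And>k. (\<Sum>i\<le>k. h i (k - i)) = 0"
  shows "\<exists>a. T2 a = h"
proof -
  define a where "a = (\<lambda>i j. \<Sum>s\<le>i. h s (i + j + 1 - s))"
  have "T2 a i j = h i j" for i j
  proof (cases j)
    case 0
    show ?thesis
    proof (cases i)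
      case 0
      have "h 0 0 = 0" using assms[of 0] by simp
      then show ?thesis using \<open>i = 0\<close> \<open>j = 0\<close> unfolding T2_def by simp
    next
      case (Suc m)
      have "(\<Sum>s\<le>Suc m. h s (Suc m - s)) = 0" using assms by blast
      then have e1: "(\<Sum>s\<le>m. h s (Suc m - s)) + h (Suc m) 0 = 0" by (simp add: sum.atMost_Suc)
      have e2: "a m 0 = (\<Sum>s\<le>m. h s (Suc m - s))"
        unfolding a_def by (intro sum.cong) auto
      have e3: "h (Suc m) 0 = - (\<Sum>s\<le>m. h s (Suc m - s))" using e1 by (simp only: add_eq_0_iff)
      have "T2 a i j = - a m 0" using Suc \<open>j = 0\<close> unfolding T2_def by simp
      also have "\<dots> = h i j" using e2 e3 Suc \<open>j = 0\<close> by simp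
      finally show ?thesis .
    qed
  next
    case (Suc jj)
    show ?thesis
    proof (cases i)
      case 0
      have "T2 a i j = a 0 jj" using Suc 0 unfolding T2_def by simp
      also have "\<dots> = h 0 j" using Suc unfolding a_def by simp
      finally show ?thesis using 0 by simp
    next
      case (Suc m)
      have e0: "T2 a i j = a (Suc m) jj - a m (Suc jj)" using Suc \<open>j = Suc jj\<close> unfolding T2_def by simp
      have e1: "a (Suc m) jj = (\<Sum>s\<le>m. h s (Suc m + jj + 1 - s)) + h (Suc m) (Suc jj)"
        unfolding a_def by (simp add: sum.atMost_Suc)
      have e2: "(\<Sum>s\<le>m. h s (Suc m + jj + 1 - s)) = a m (Suc jj)"
        unfolding a_def by (intro sum.cong) auto
      show ?thesis using e0 e1 e2 Suc \<open>j = Suc jj\<close> by simp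
    qed
  qed
  then show ?thesis by blast
qed

lemma dy1_0: "dy1 q fg 0 = T2 (fst fg 0)"
  by (auto simp: dy1_def T2_def mul1_def mul2_def Dq_def Nsh_def fun_diff_def intro!: ext)

lemma dx1_0: "dx1 q fg 0 = T2 (snd fg 0)"
  by (auto simp: dx1_def T2_def mul1_def mul2_def Dq_def Nsh_def fun_diff_def plus_fun_def intro!: ext)

lemma piy_T: "(piy h = 0) \<longleftrightarrow> (\<forall>k. (\<Sum>i\<le>k. h 0 i (k - i)) = 0)"
  by (simp add: piy_def fps_eq_iff)

lemma pix_T: "(pix h = 0) \<longleftrightarrow> (\<forall>k. (\<Sum>i\<le>k. h 0 i (k - i)) = 0)"
  by (simp add: pix_def fps_eq_iff)

lemma left_exact: "exact4 (dy0 q) (dy1 q) piy"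
  unfolding exact4_def
proof (intro conjI)
  show "inj (dy0 q)"
  proof (rule injI)
    fix f g assume "dy0 q f = dy0 q g"
    then have "Nsh f = Nsh g" by (simp add: dy0_def)
    then have "\<And>n. Nsh f (Suc n) = Nsh g (Suc n)" by simp
    then show "f = g" by (auto simp: Nsh_def intro!: ext)
  qed
  show "range (dy0 q) = {v. dy1 q v = 0}"
  proof (intro set_eqI iffI)
    fix v assume "v \<in> range (dy0 q)"
    then obtain f where v: "v = dy0 q f" by auto
    show "v \<in> {v. dy1 q v = 0}"
      unfolding v
    proof (simp, intro ext)
      fix n i j
      show "dy1 q (dy0 q f) n i j = 0 n i j"
        by (cases n; cases "i = 0"; cases "j = 0") (simp_all add: dy0_def dy1_def mul1_def mul2_def Dq_def Nsh_def scal_def fun_diff_def)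
    qed
  next
    fix v assume "v \<in> {v. dy1 q v = 0}"
    then have z: "dy1 q v = 0" by simp
    obtain f g where v: "v = (f, g)" by fastforce
    have zz: "\<And>n i j. dy1 q (f, g) n i j = 0" using z v by simp
    have "T2 (f 0) = (\<lambda>i j. 0)" using dy1_0[of q "(f,g)"] z v by (simp add: zero_fun_def)
    then have f0: "f 0 = (\<lambda>i j. 0)" by (rule T2_zero)
    define h where "h = (\<lambda>n. f (Suc n))"
    have "dy0 q h = (f, g)"
    proof -
      have "Nsh h = f"
        using f0 by (auto simp: Nsh_def h_def intro!: ext)
      moreover have "mul2 h - scal q (mul1 (Dq q h)) = g"
      proof (intro ext)
        fix n i j
        show "(mul2 h - scal q (mul1 (Dq q h))) n i j = g n i j"
        proof -
          have e0: "dy1 q (f,g) (Suc n) i j = ((if j=0 then 0 else f (Suc n) i (j-1)) - (if i=0 then 0 else q^Suc n * f (Suc n) (i-1) j)) - g n i j"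
            by (simp add: dy1_def mul1_def mul2_def Dq_def Nsh_def fun_diff_def)
          have e1: "g n i j = (if j=0 then 0 else f (Suc n) i (j-1)) - (if i=0 then 0 else q^Suc n * f (Suc n) (i-1) j)"
            using zz[of "Suc n" i j] unfolding e0 by simp
          show ?thesis unfolding e1
            by (cases "i = 0"; cases "j = 0") (simp_all add: h_def mul1_def mul2_def Dq_def scal_def fun_diff_def)
        qed
      qed
      ultimately show ?thesis by (simp add: dy0_def)
    qed
    then have "v = dy0 q h" using v by simp
    then show "v \<in> range (dy0 q)" by (simp add: rangeI)
  qed
  show "range (dy1 q) = {h. piy h = 0}"
  proof (intro set_eqI iffI)
    fix h assume "h \<in> range (dy1 q)"
    then obtain fg where h: "h = dy1 q fg" by auto
    show "h \<in> {h. piy h = 0}"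
      unfolding h using dy1_0[of q fg] T2_sum by (simp add: piy_T)
  next
    fix h assume "h \<in> {h. piy h = 0}"
    then have "\<And>k. (\<Sum>i\<le>k. h 0 i (k - i)) = 0" by (simp add: piy_T)
    then obtain a where a: "T2 a = h 0" using T2_surj by blast
    define f :: ser3 where "f = (\<lambda>n. if n = 0 then a else (\<lambda>i j. 0))"
    define g :: ser3 where "g = (\<lambda>n i j. - h (Suc n) i j)"
    have "dy1 q (f, g) = h"
    proof (intro ext)
      fix n i j
      show "dy1 q (f, g) n i j = h n i j"
      proof (cases n)
        case 0
        then show ?thesis using dy1_0[of q "(f,g)"] a by (simp add: f_def)
      next
        case (Suc m)
        then show ?thesis
          by (simp add: dy1_def f_def g_def mul1_def mul2_def Dq_def Nsh_def fun_diff_def)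
      qed
    qed
    then show "h \<in> range (dy1 q)" by (metis rangeI)
  qed
  show "surj piy"
  proof (rule surjI)
    fix p :: "complex fps"
    show "piy (\<lambda>n i j. if n = 0 \<and> j = 0 then fps_nth p i else 0) = p"
    proof (rule fps_ext)
      fix k
      have "(\<Sum>i\<le>k. (if k - i = 0 then fps_nth p i else 0)) = (\<Sum>i\<le>k. (if i = k then fps_nth p i else 0))"
        by (intro sum.cong) auto
      then show "fps_nth (piy (\<lambda>n i j. if n = 0 \<and> j = 0 then fps_nth p i else 0)) k = fps_nth p k"
        by (simp add: piy_def)
    qed
  qed
qed

lemma right_exact: "exact4 (dx0 q) (dx1 q) pix"
  unfolding exact4_def
proof (intro conjI)
  show "inj (dx0 q)"
  proof (rule injI)
    fix f g assume "dx0 q f = dx0 q g"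
    then have "Nsh f = Nsh g" by (simp add: dx0_def)
    then have "\<And>n. Nsh f (Suc n) = Nsh g (Suc n)" by simp
    then show "f = g" by (auto simp: Nsh_def intro!: ext)
  qed
  show "range (dx0 q) = {v. dx1 q v = 0}"
  proof (intro set_eqI iffI)
    fix v assume "v \<in> range (dx0 q)"
    then obtain f where v: "v = dx0 q f" by auto
    show "v \<in> {v. dx1 q v = 0}"
      unfolding v
    proof (simp, intro ext)
      fix n i j
      show "dx1 q (dx0 q f) n i j = 0 n i j"
        by (cases n; cases "i = 0"; cases "j = 0") (simp_all add: dx0_def dx1_def mul1_def mul2_def Dq_def Nsh_def scal_def fun_diff_def plus_fun_def)
    qed
  next
    fix v assume "v \<in> {v. dx1 q v = 0}"
    then have z: "dx1 q v = 0" by simp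
    obtain f g where v: "v = (f, g)" by fastforce
    have zz: "\<And>n i j. dx1 q (f, g) n i j = 0" using z v by simp
    have "T2 (g 0) = (\<lambda>i j. 0)" using dx1_0[of q "(f,g)"] z v by (simp add: zero_fun_def)
    then have g0: "g 0 = (\<lambda>i j. 0)" by (rule T2_zero)
    define h where "h = (\<lambda>n. g (Suc n))"
    have "dx0 q h = (f, g)"
    proof -
      have "Nsh h = g"
        using g0 by (auto simp: Nsh_def h_def intro!: ext)
      moreover have "mul1 h - scal q (mul2 (Dq q h)) = f"
      proof (intro ext)
        fix n i j
        show "(mul1 h - scal q (mul2 (Dq q h))) n i j = f n i j"
        proof -
          have e0: "dx1 q (f,g) (Suc n) i j = f n i j + ((if j=0 then 0 else q^Suc n * g (Suc n) i (j-1)) - (if i=0 then 0 else g (Suc n) (i-1) j))"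
            by (simp add: dx1_def mul1_def mul2_def Dq_def Nsh_def fun_diff_def plus_fun_def)
          have e1: "f n i j = (if i=0 then 0 else g (Suc n) (i-1) j) - (if j=0 then 0 else q^Suc n * g (Suc n) i (j-1))"
            using zz[of "Suc n" i j] unfolding e0 by (simp only: add_eq_0_iff2 minus_diff_eq)
          show ?thesis unfolding e1
            by (cases "i = 0"; cases "j = 0") (simp_all add: h_def mul1_def mul2_def Dq_def scal_def fun_diff_def)
        qed
      qed
      ultimately show ?thesis by (simp add: dx0_def)
    qed
    then have "v = dx0 q h" using v by simp
    then show "v \<in> range (dx0 q)" by (simp add: rangeI)
  qed
  show "range (dx1 q) = {h. pix h = 0}"
  proof (intro set_eqI iffI)
    fix h assume "h \<in> range (dx1 q)"
    then obtain fg where h: "h = dx1 q fg" by auto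
    show "h \<in> {h. pix h = 0}"
      unfolding h using dx1_0[of q fg] T2_sum by (simp add: pix_T)
  next
    fix h assume "h \<in> {h. pix h = 0}"
    then have "\<And>k. (\<Sum>i\<le>k. h 0 i (k - i)) = 0" by (simp add: pix_T)
    then obtain a where a: "T2 a = h 0" using T2_surj by blast
    define g :: ser3 where "g = (\<lambda>n. if n = 0 then a else (\<lambda>i j. 0))"
    define f :: ser3 where "f = (\<lambda>n i j. h (Suc n) i j)"
    have "dx1 q (f, g) = h"
    proof (intro ext)
      fix n i j
      show "dx1 q (f, g) n i j = h n i j"
      proof (cases n)
        case 0
        then show ?thesis using dx1_0[of q "(f,g)"] a by (simp add: g_def)
      next
        case (Suc m)
        then show ?thesis
          by (simp add: dx1_def f_def g_def mul1_def mul2_def Dq_def Nsh_def fun_diff_def plus_fun_def)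
      qed
    qed
    then show "h \<in> range (dx1 q)" by (metis rangeI)
  qed
  show "surj pix"
  proof (rule surjI)
    fix p :: "complex fps"
    show "pix (\<lambda>n i j. if n = 0 \<and> j = 0 then fps_nth p i else 0) = p"
    proof (rule fps_ext)
      fix k
      have "(\<Sum>i\<le>k. (if k - i = 0 then fps_nth p i else 0)) = (\<Sum>i\<le>k. (if i = k then fps_nth p i else 0))"
        by (intro sum.cong) auto
      then show "fps_nth (pix (\<lambda>n i j. if n = 0 \<and> j = 0 then fps_nth p i else 0)) k = fps_nth p k"
        by (simp add: pix_def)
    qed
  qed
qed


theorem lemma5p1:
  fixes q :: complex
  assumes "q \<noteq> 0" and "q \<noteq> 1"
  shows "exact4 (dy0 q) (dy1 q) piy \<and> exact4 (dx0 q) (dx1 q) pix"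
  using left_exact right_exact by blast

end
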